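(* Let $A$ be a JBW algebra, let $p,q\in A$ be nonzero projections with $p\circ q=0$, and let $z\in A$ be a nonzero projection different from $p$ and from $q$. Then $z=p+q$ if and only if the linear span of $\{p,q,z\}$ is a two-dimensional associative subalgebra of $A$.
   Context: A JB algebra is a real Banach algebra $(A,\circ)$ with a commutative product satisfying $a\circ(b\circ a^2)=(a\circ b)\circ a^2$, $\|a^2\|\le\|a^2+b^2\|$, $\|a\|^2=\|a^2\|$; a JBW algebra is a JB algebra that is a dual Banach space. A projection is an element $p$ with $p\circ p=p$. *)

theory Defs
  imports "HOL-Analysis.Analysis"
begin

definition JB_algebra :: "('a::banach \<Rightarrow> 'a \<Rightarrow> 'a) \<Rightarrow> bool" where
  "JB_algebra jp \<longleftrightarrow>
     bilinear jp \<and>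
     (\<forall>a b. jp a b = jp b a) \<and>
     (\<forall>a b. norm (jp a b) \<le> norm a * norm b) \<and>
     (\<forall>a b. jp a (jp b (jp a a)) = jp (jp a b) (jp a a)) \<and>
     (\<forall>a b. norm (jp a a) \<le> norm (jp a a + jp b b)) \<and>
     (\<forall>a. (norm a)\<^sup>2 = norm (jp a a))"

text \<open>V (a set of bounded linear functionals on A) is a predual of A:
a closed subspace of the dual such that a \<mapsto> (f \<mapsto> f a) is an isometric
isomorphism of A onto the Banach dual of V.\<close>
definition is_predual :: "('a::real_normed_vector \<Rightarrow>\<^sub>L real) set \<Rightarrow> bool" where
  "is_predual V \<longleftrightarrow>
     subspace V \<and> closed V \<and>
     (\<forall>a::'a. norm a = (SUP f\<in>{f\<in>V. norm f \<le> 1}. \<bar>blinfun_apply f a\<bar>)) \<and>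
     (\<forall>\<phi> :: ('a \<Rightarrow>\<^sub>L real) \<Rightarrow> real.
        ((\<forall>f\<in>V. \<forall>g\<in>V. \<phi> (f + g) = \<phi> f + \<phi> g) \<and>
         (\<forall>f\<in>V. \<forall>c. \<phi> (c *\<^sub>R f) = c * \<phi> f) \<and>
         (\<exists>C. \<forall>f\<in>V. \<bar>\<phi> f\<bar> \<le> C * norm f))
        \<longrightarrow> (\<exists>a. \<forall>f\<in>V. \<phi> f = blinfun_apply f a))"

definition dual_banach_space :: "'a::real_normed_vector itself \<Rightarrow> bool" where
  "dual_banach_space (_ :: 'a itself) \<longleftrightarrow> (\<exists>V :: ('a \<Rightarrow>\<^sub>L real) set. is_predual V)"

definition JBW_algebra :: "('a::banach \<Rightarrow> 'a \<Rightarrow> 'a) \<Rightarrow> bool" where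
  "JBW_algebra jp \<longleftrightarrow> JB_algebra jp \<and> dual_banach_space TYPE('a)"

definition jprojection :: "('a \<Rightarrow> 'a \<Rightarrow> 'a) \<Rightarrow> 'a \<Rightarrow> bool" where
  "jprojection jp p \<longleftrightarrow> jp p p = p"

definition subalgebra :: "('a \<Rightarrow> 'a \<Rightarrow> 'a) \<Rightarrow> 'a::real_vector set \<Rightarrow> bool" where
  "subalgebra jp B \<longleftrightarrow> subspace B \<and> (\<forall>x\<in>B. \<forall>y\<in>B. jp x y \<in> B)"

definition associative_on :: "('a \<Rightarrow> 'a \<Rightarrow> 'a) \<Rightarrow> 'a set \<Rightarrow> bool" where
  "associative_on jp B \<longleftrightarrow> (\<forall>x\<in>B. \<forall>y\<in>B. \<forall>w\<in>B. jp (jp x y) w = jp x (jp y w))"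

end

theory Submission
  imports Defs
begin

lemma span2_iff:
  fixes p q :: "'a::real_vector"
  shows "x \<in> span {p, q} \<longleftrightarrow> (\<exists>a b. x = a *\<^sub>R p + b *\<^sub>R q)"
  by (simp add: span_breakdown_eq span_empty) (metis add_diff_cancel_left' diff_add_cancel diff_diff_add eq_iff_diff_eq_0 add.commute)

lemma bil_mult:
  assumes bl: "bilinear jp" and pp: "jp p p = p" and qq: "jp q q = q" and pq: "jp p q = 0"
    and comm: "\<forall>a b. jp a b = jp b a"
  shows "jp (a *\<^sub>R p + b *\<^sub>R q) (c *\<^sub>R p + d *\<^sub>R q) = (a*c) *\<^sub>R p + (b*d) *\<^sub>R q"
proof -
  have l1: "\<And>x. linear (jp x)" and l2: "\<And>y. linear (\<lambda>x. jp x y)"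
    using bl unfolding bilinear_def by auto
  have qp: "jp q p = 0" using comm pq by metis
  have s1: "\<And>x c y. jp x (c *\<^sub>R y) = c *\<^sub>R jp x y"
    and s2: "\<And>x c y. jp (c *\<^sub>R x) y = c *\<^sub>R jp x y"
    and a1: "\<And>x y w. jp x (y + w) = jp x y + jp x w"
    and a2: "\<And>x y w. jp (y + w) x = jp y x + jp w x"
    using l1 l2 by (simp_all add: linear_iff)
  have "jp (a *\<^sub>R p + b *\<^sub>R q) (c *\<^sub>R p + d *\<^sub>R q)
      = jp (a *\<^sub>R p + b *\<^sub>R q) (c *\<^sub>R p) + jp (a *\<^sub>R p + b *\<^sub>R q) (d *\<^sub>R q)"
    using a1 by simp
  also have "\<dots> = c *\<^sub>R jp (a *\<^sub>R p + b *\<^sub>R q) p + d *\<^sub>R jp (a *\<^sub>R p + b *\<^sub>R q) q"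
    using s1 by simp
  also have "jp (a *\<^sub>R p + b *\<^sub>R q) p = a *\<^sub>R jp p p + b *\<^sub>R jp q p"
    using a2 s2 by simp
  also have "jp (a *\<^sub>R p + b *\<^sub>R q) q = a *\<^sub>R jp p q + b *\<^sub>R jp q q"
    using a2 s2 by simp
  finally show ?thesis using pp qq pq qp by (simp add: algebra_simps)
qed

theorem lemma3p4:
  fixes jp :: "'a::banach \<Rightarrow> 'a \<Rightarrow> 'a" and p q z :: 'a
  assumes "JBW_algebra jp"
    and "jprojection jp p" and "p \<noteq> 0"
    and "jprojection jp q" and "q \<noteq> 0"
    and "jp p q = 0"
    and "jprojection jp z" and "z \<noteq> 0" and "z \<noteq> p" and "z \<noteq> q"
  shows "z = p + q \<longleftrightarrow>
           (subalgebra jp (span {p, q, z}) \<and> associative_on jp (span {p, q, z})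
            \<and> dim (span {p, q, z}) = 2)"
proof -
  have bl: "bilinear jp" and comm: "\<forall>a b. jp a b = jp b a"
    using assms(1) unfolding JBW_algebra_def JB_algebra_def by auto
  have pp: "jp p p = p" and qq: "jp q q = q" and zz: "jp z z = z"
    using assms unfolding jprojection_def by auto
  note M = bil_mult[OF bl pp qq assms(6) comm]
  have indep: "a *\<^sub>R p + b *\<^sub>R q = 0 \<Longrightarrow> a = 0 \<and> b = 0" for a b
  proof -
    assume h: "a *\<^sub>R p + b *\<^sub>R q = 0"
    have "jp (a *\<^sub>R p + b *\<^sub>R q) (1 *\<^sub>R p + 0 *\<^sub>R q) = a *\<^sub>R p" using M[of a b 1 0] by simp
    moreover have "jp (a *\<^sub>R p + b *\<^sub>R q) (0 *\<^sub>R p + 1 *\<^sub>R q) = b *\<^sub>R q" using M[of a b 0 1] by simp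
    moreover have "jp 0 x = 0" for x using bl bilinear_lzero by blast
    ultimately show ?thesis using h assms(3,5) by simp
  qed
  have pns: "p \<notin> span {q}"
  proof
    assume "p \<in> span {q}"
    then obtain c where "p = c *\<^sub>R q" by (auto simp: span_singleton)
    then have "1 *\<^sub>R p + (-c) *\<^sub>R q = 0" by simp
    then show False using indep[of 1 "-c"] by simp
  qed
  have pq_ne: "p \<noteq> q" using assms(2,3,6) unfolding jprojection_def by auto
  have indq: "independent {q}"
    using assms(5) by (simp add: real_vector.independent_insert span_empty)
  have indpq: "independent {p, q}"
    using indq pns pq_ne by (simp add: real_vector.independent_insert)
  have ins: "{p, q, z} = insert z {p, q}" by auto
  have dimeq: "dim (span {p, q, z}) = (if z \<in> span {p, q} then 2 else 3)"
  proof (cases "z \<in> span {p, q}")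
    case True
    then have "span {p, q, z} = span {p, q}" unfolding ins by (simp add: span_redundant)
    then show ?thesis using True real_vector.dim_span_eq_card_independent[OF indpq] pq_ne by simp
  next
    case False
    then have "independent {p, q, z}" unfolding ins using indpq assms(9,10)
      by (simp add: real_vector.independent_insert)
    then show ?thesis using False real_vector.dim_span_eq_card_independent pq_ne assms(9,10) by fastforce
  qed
  show ?thesis
  proof
    assume zpq: "z = p + q"
    have zin: "z \<in> span {p, q}" unfolding zpq by (simp add: span_add span_base)
    have spe: "span {p, q, z} = span {p, q}"
      unfolding ins using zin by (simp add: span_redundant)
    have sub: "subalgebra jp (span {p, q, z})"
      unfolding subalgebra_def spe
      by (auto simp: span2_iff M subspace_span) blast
    have "associative_on jp (span {p, q, z})"
      unfolding associative_on_def spe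
      by (auto simp: span2_iff M mult.assoc)
    then show "subalgebra jp (span {p, q, z}) \<and> associative_on jp (span {p, q, z})
            \<and> dim (span {p, q, z}) = 2" using sub dimeq zin by simp
  next
    assume "subalgebra jp (span {p, q, z}) \<and> associative_on jp (span {p, q, z})
            \<and> dim (span {p, q, z}) = 2"
    then have "z \<in> span {p, q}" using dimeq by (auto split: if_splits)
    then obtain a b where zab: "z = a *\<^sub>R p + b *\<^sub>R q" by (auto simp: span2_iff)
    have "(a*a) *\<^sub>R p + (b*b) *\<^sub>R q = a *\<^sub>R p + b *\<^sub>R q" using zz M[of a b a b] zab by simp
    then have "(a*a - a) *\<^sub>R p + (b*b - b) *\<^sub>R q = 0" by (simp add: algebra_simps)
    then have "a*a - a = 0" "b*b - b = 0" using indep by blast+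
    then have "a = 0 \<or> a = 1" "b = 0 \<or> b = 1"
      by (metis mult_cancel_right1 right_minus_eq mult_zero_left)+
    then show "z = p + q" using zab assms(8,9,10) by auto
  qed
qed

end
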